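(* Let $\mu=\mathcal{N}(0,\sigma_X^2)$ and $\psi=\mathcal{N}(0,\sigma_Y^2)$ on $\mathbb{R}$ with $\sigma_X,\sigma_Y>0$, and $\rho(x,y)=(x-y)^2$. Then the minimum in $I(\mu\|\psi,D)=\min\{I(X;Y):P_X=\mu,P_Y=\psi,\mathbb{E}[(X-Y)^2]\le D\}$ may be restricted to jointly Gaussian $(X,Y)$, and for $(\sigma_X-\sigma_Y)^2\le D\le\sigma_X^2+\sigma_Y^2$, $$I(\mu\|\psi,D)=\frac12\log\frac{1}{1-r^2},\qquad r=\frac{\sigma_X^2+\sigma_Y^2-D}{2\sigma_X\sigma_Y}.$$
   Context: $I(\mu\|\psi,D)$ is the minimum mutual information with constrained output; by the paper's main theorem it equals the minimum coding rate when unlimited common randomness is shared between encoder and decoder in the output-constrained (output exactly i.i.d. $\psi$) lossy source coding problem. *)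

theory Defs
  imports "HOL-Probability.Probability"
begin

definition mutual_info :: "(real \<times> real) measure \<Rightarrow> ereal" where
  "mutual_info P =
     (let Q = distr P borel fst \<Otimes>\<^sub>M distr P borel snd in
      if absolutely_continuous Q P \<and> integrable P (entropy_density (exp 1) Q P)
      then ereal (KL_divergence (exp 1) Q P) else \<infinity>)"

definition gauss_coupling :: "real \<Rightarrow> real \<Rightarrow> real \<Rightarrow> (real \<times> real) measure \<Rightarrow> bool" where
  "gauss_coupling sx sy D P \<longleftrightarrow>
     sets P = sets (borel \<Otimes>\<^sub>M borel) \<and> prob_space P \<and>
     distr P borel fst = density lborel (normal_density 0 sx) \<and>
     distr P borel snd = density lborel (normal_density 0 sy) \<and>
     integrable P (\<lambda>z. (fst z - snd z)\<^sup>2) \<and>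
     (\<integral>z. (fst z - snd z)\<^sup>2 \<partial>P) \<le> D"

definition jointly_gaussian :: "(real \<times> real) measure \<Rightarrow> bool" where
  "jointly_gaussian P \<longleftrightarrow>
     (\<exists>a b c d m n. P = distr (density lborel std_normal_density \<Otimes>\<^sub>M density lborel std_normal_density)
        (borel \<Otimes>\<^sub>M borel) (\<lambda>(u, v). (a * u + b * v + m, c * u + d * v + n)))"

definition I_out :: "real \<Rightarrow> real \<Rightarrow> real \<Rightarrow> ereal" where
  "I_out sx sy D = (INF P \<in> {P. gauss_coupling sx sy D P}. mutual_info P)"

end

theory Submission imports Defs begin

definition NN :: "real measure" where "NN = density lborel std_normal_density"
definition Ns :: "real \<Rightarrow> real measure" where "Ns s = density lborel (normal_density 0 s)"
definition Tm :: "real \<Rightarrow> real \<Rightarrow> real \<Rightarrow> real \<times> real \<Rightarrow> real \<times> real" where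
  "Tm a b r = (\<lambda>(u, v). (a * u, b * (r * u + sqrt (1 - r\<^sup>2) * v)))"
definition gg :: "real \<Rightarrow> real \<Rightarrow> real \<Rightarrow> real \<times> real \<Rightarrow> real" where
  "gg a b r = (\<lambda>(x,y). - ln (sqrt (1-r\<^sup>2)) - r * (r * (x/a)\<^sup>2 - 2 * (x/a) * (y/b) + r * (y/b)\<^sup>2)/(2 * (1-r\<^sup>2)))"

lemma sets_NN[simp, measurable_cong]: "sets NN = sets borel" by (simp add: NN_def)
lemma sets_Ns[simp, measurable_cong]: "sets (Ns s) = sets borel" by (simp add: Ns_def)
lemma space_NN[simp]: "space NN = UNIV" by (simp add: NN_def)
lemma space_Ns[simp]: "space (Ns s) = UNIV" by (simp add: Ns_def)
lemma prob_NN: "prob_space NN" unfolding NN_def by (rule prob_space_normal_density) simp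
lemma prob_Ns: "s > 0 \<Longrightarrow> prob_space (Ns s)" unfolding Ns_def by (rule prob_space_normal_density)

lemma Tm_meas[measurable]: "Tm a b r \<in> (borel \<Otimes>\<^sub>M borel) \<rightarrow>\<^sub>M (borel \<Otimes>\<^sub>M borel)"
  unfolding Tm_def by measurable
lemma gg_meas[measurable]: "gg a b r \<in> borel_measurable (borel \<Otimes>\<^sub>M borel)"
  unfolding gg_def by measurable

lemma aff_subst:
  fixes c :: real assumes [measurable]: "f \<in> borel_measurable borel" and c: "c \<noteq> 0"
  shows "(\<integral>\<^sup>+x. f x \<partial>lborel) = (\<integral>\<^sup>+x. ennreal \<bar>c\<bar> * f (t + c * x) \<partial>lborel)"
  by (subst lborel_real_affine[OF c, of t]) (simp add: nn_integral_density nn_integral_distr)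

lemma id1: assumes "a > 0" shows "a * normal_density 0 a (a * u) = std_normal_density u"
  using assms by (simp add: normal_density_def real_sqrt_mult field_simps power2_eq_square)

lemma hh: assumes "r * r + s * s = (1::real)" shows "r * (r * (s * (s * X))) + s * (s * (s * (s * X))) = s * (s * X)"
proof -
  have "r * (r * (s * (s * X))) + s * (s * (s * (s * X))) = (r * r + s * s) * (s * (s * X))" by (simp add: algebra_simps)
  then show ?thesis using assms by simp
qed

lemma id2:
  assumes a: "a > 0" and b: "b > 0" and r: "-1 < r" "r < 1"
  shows "b * sqrt (1-r\<^sup>2) * normal_density 0 b (b * r * u + b * sqrt(1-r\<^sup>2) * v) * exp (gg a b r (a * u, b * r * u + b * sqrt(1-r\<^sup>2) * v))
     = std_normal_density v"
proof -
  define s where "s = sqrt (1-r\<^sup>2)"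
  have s2: "s\<^sup>2 = 1 - r\<^sup>2" using r unfolding s_def by (simp add: abs_square_less_1 less_imp_le)
  have sp: "s > 0" using r unfolding s_def by (simp add: abs_square_less_1)
  define w where "w = r * u + s * v"
  have e1: "b * r * u + b * s * v = b * w" by (simp add: w_def algebra_simps)
  have gw: "gg a b r (a * u, b * w) = - ln s - r * (r * u\<^sup>2 - 2 * u * w + r * w\<^sup>2)/(2 * s\<^sup>2)"
    using a b unfolding gg_def s_def[symmetric] s2 by simp
  have nd: "b * normal_density 0 b (b * w) = std_normal_density w" using id1[OF b] .
  define X where "X = r * (r * u\<^sup>2 - 2 * u * w + r * w\<^sup>2)/(2 * s\<^sup>2)"
  have gw2: "gg a b r (a * u, b * w) = (- X) + (- ln s)" unfolding gw X_def by simp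
  have ex: "exp (gg a b r (a * u, b * w)) = exp (- X) / s"
    unfolding gw2 exp_add exp_minus using sp by (simp add: divide_inverse)
  have "b * s * normal_density 0 b (b * w) * exp (gg a b r (a * u, b * w))
      = std_normal_density w * exp (- X)"
    unfolding ex nd[symmetric] using sp by (simp add: field_simps)
  also have "\<dots> = std_normal_density w * exp (- r * (r * u\<^sup>2 - 2 * u * w + r * w\<^sup>2)/(2 * s\<^sup>2))"
    by (simp add: X_def)
  also have "\<dots> = (1 / sqrt (2 * pi)) * exp (- w\<^sup>2 / 2 + (- r * (r * u\<^sup>2 - 2 * u * w + r * w\<^sup>2)/(2 * s\<^sup>2)))"
    by (simp add: std_normal_density_def exp_add[symmetric])
  also have "- w\<^sup>2 / 2 + (- r * (r * u\<^sup>2 - 2 * u * w + r * w\<^sup>2)/(2 * s\<^sup>2)) = - v\<^sup>2/2"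
  proof -
    have "v = (w - r * u)/s" using sp by (simp add: w_def)
    then have "- v\<^sup>2/2 = - (w - r * u)\<^sup>2/(2 * s\<^sup>2)" by (simp add: power_divide)
    also have "\<dots> = - w\<^sup>2 / 2 + (- r * (r * u\<^sup>2 - 2 * u * w + r * w\<^sup>2)/(2 * s\<^sup>2))"
      using sp s2 by (simp add: field_simps power2_eq_square) (rule hh, simp)
    finally show ?thesis by simp
  qed
  finally show ?thesis unfolding e1[unfolded s_def] s_def std_normal_density_def by simp
qed

lemma sets_NN2[measurable_cong]: "sets (NN \<Otimes>\<^sub>M NN) = sets (borel \<Otimes>\<^sub>M borel)"
  by (intro sets_pair_measure_cong) simp_all
lemma sets_Ns2[measurable_cong]: "sets (Ns a \<Otimes>\<^sub>M Ns b) = sets (borel \<Otimes>\<^sub>M borel)"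
  by (intro sets_pair_measure_cong) simp_all

lemma core_int:
  assumes a: "a > 0" and b: "b > 0" and r: "-1 < r" "r < 1"
    and F[measurable]: "F \<in> borel_measurable (borel \<Otimes>\<^sub>M borel)"
  shows "(\<integral>\<^sup>+z. F (Tm a b r z) \<partial>(NN \<Otimes>\<^sub>M NN)) = (\<integral>\<^sup>+z. ennreal (exp (gg a b r z)) * F z \<partial>(Ns a \<Otimes>\<^sub>M Ns b))"
proof -
  interpret N: prob_space NN by (rule prob_NN)
  interpret Nb: prob_space "Ns b" using prob_Ns b .
  define s where "s = sqrt (1 - r\<^sup>2)"
  have sp: "s > 0" using r unfolding s_def by (simp add: abs_square_less_1)
  have m1: "(\<lambda>z. F (Tm a b r z)) \<in> borel_measurable (NN \<Otimes>\<^sub>M NN)" by measurable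
  have m2: "(\<lambda>z. ennreal (exp (gg a b r z)) * F z) \<in> borel_measurable (Ns a \<Otimes>\<^sub>M Ns b)" by measurable
  have "(\<integral>\<^sup>+z. F (Tm a b r z) \<partial>(NN \<Otimes>\<^sub>M NN)) = (\<integral>\<^sup>+u. \<integral>\<^sup>+v. F (Tm a b r (u, v)) \<partial>NN \<partial>NN)"
    using N.nn_integral_fst[OF m1] by simp
  also have "\<dots> = (\<integral>\<^sup>+u. ennreal (std_normal_density u) * (\<integral>\<^sup>+v. ennreal (std_normal_density v) * F (a * u, b * (r * u + s * v)) \<partial>lborel) \<partial>lborel)"
    unfolding NN_def Tm_def s_def by (simp add: nn_integral_density)
  finally have L: "(\<integral>\<^sup>+z. F (Tm a b r z) \<partial>(NN \<Otimes>\<^sub>M NN)) = \<dots>" .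
  have "(\<integral>\<^sup>+z. ennreal (exp (gg a b r z)) * F z \<partial>(Ns a \<Otimes>\<^sub>M Ns b))
     = (\<integral>\<^sup>+x. \<integral>\<^sup>+y. ennreal (exp (gg a b r (x, y))) * F (x, y) \<partial>Ns b \<partial>Ns a)"
    using Nb.nn_integral_fst[OF m2] by simp
  also have "\<dots> = (\<integral>\<^sup>+x. ennreal (normal_density 0 a x) * (\<integral>\<^sup>+y. ennreal (normal_density 0 b y) * (ennreal (exp (gg a b r (x, y))) * F (x, y)) \<partial>lborel) \<partial>lborel)"
    unfolding Ns_def by (simp add: nn_integral_density)
  also have "\<dots> = (\<integral>\<^sup>+u. ennreal \<bar>a\<bar> * (ennreal (normal_density 0 a (0 + a * u)) * (\<integral>\<^sup>+y. ennreal (normal_density 0 b y) * (ennreal (exp (gg a b r (0 + a * u, y))) * F (0 + a * u, y)) \<partial>lborel)) \<partial>lborel)"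
    by (rule aff_subst) (use a in auto)
  also have "\<dots> = (\<integral>\<^sup>+u. ennreal (std_normal_density u) * (\<integral>\<^sup>+v. ennreal (std_normal_density v) * F (a * u, b * (r * u + s * v)) \<partial>lborel) \<partial>lborel)"
  proof (intro nn_integral_cong)
    fix u
    have i: "(\<integral>\<^sup>+y. ennreal (normal_density 0 b y) * (ennreal (exp (gg a b r (a * u, y))) * F (a * u, y)) \<partial>lborel)
      = (\<integral>\<^sup>+v. ennreal \<bar>b * s\<bar> * (ennreal (normal_density 0 b (b * r * u + b * s * v)) * (ennreal (exp (gg a b r (a * u, b * r * u + b * s * v))) * F (a * u, b * r * u + b * s * v))) \<partial>lborel)"
      by (rule aff_subst) (use b sp in auto)
    also have "\<dots> = (\<integral>\<^sup>+v. ennreal (std_normal_density v) * F (a * u, b * (r * u + s * v)) \<partial>lborel)"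
    proof (intro nn_integral_cong)
      fix v
      have "ennreal \<bar>b * s\<bar> * (ennreal (normal_density 0 b (b * r * u + b * s * v)) * (ennreal (exp (gg a b r (a * u, b * r * u + b * s * v))) * F (a * u, b * r * u + b * s * v)))
        = ennreal (b * s * normal_density 0 b (b * r * u + b * s * v) * exp (gg a b r (a * u, b * r * u + b * s * v))) * F (a * u, b * r * u + b * s * v)"
        using b sp by (simp add: ennreal_mult mult.assoc)
      also have "\<dots> = ennreal (std_normal_density v) * F (a * u, b * (r * u + s * v))"
        using id2[OF a b r, of u v] unfolding s_def by (simp add: algebra_simps)
      finally show "ennreal \<bar>b * s\<bar> * (ennreal (normal_density 0 b (b * r * u + b * s * v)) * (ennreal (exp (gg a b r (a * u, b * r * u + b * s * v))) * F (a * u, b * r * u + b * s * v)))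
        = ennreal (std_normal_density v) * F (a * u, b * (r * u + s * v))" .
    qed
    finally have i2: "(\<integral>\<^sup>+y. ennreal (normal_density 0 b y) * (ennreal (exp (gg a b r (a * u, y))) * F (a * u, y)) \<partial>lborel) = (\<integral>\<^sup>+v. ennreal (std_normal_density v) * F (a * u, b * (r * u + s * v)) \<partial>lborel)" .
    show "ennreal \<bar>a\<bar> * (ennreal (normal_density 0 a (0 + a * u)) * (\<integral>\<^sup>+y. ennreal (normal_density 0 b y) * (ennreal (exp (gg a b r (0 + a * u, y))) * F (0 + a * u, y)) \<partial>lborel))
      = ennreal (std_normal_density u) * (\<integral>\<^sup>+v. ennreal (std_normal_density v) * F (a * u, b * (r * u + s * v)) \<partial>lborel)"
      using id1[OF a, of u] a unfolding i2[symmetric] by (simp add: ennreal_mult[symmetric] mult.assoc[symmetric])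
  qed
  finally show ?thesis using L by simp
qed

definition Pr :: "real \<Rightarrow> real \<Rightarrow> real \<Rightarrow> (real \<times> real) measure" where
  "Pr a b r = distr (NN \<Otimes>\<^sub>M NN) (borel \<Otimes>\<^sub>M borel) (Tm a b r)"

lemma em_distr:
  assumes [measurable]: "f \<in> M \<rightarrow>\<^sub>M N" "B \<in> sets N"
  shows "emeasure (distr M N f) B = (\<integral>\<^sup>+z. indicator B (f z) \<partial>M)"
proof -
  have "emeasure (distr M N f) B = (\<integral>\<^sup>+z. indicator B z \<partial>distr M N f)"
    by (simp add: nn_integral_indicator)
  also have "\<dots> = (\<integral>\<^sup>+z. indicator B (f z) \<partial>M)"
    by (rule nn_integral_distr) (auto simp: assms)
  finally show ?thesis .
qed

lemma em_density:
  assumes [measurable]: "h \<in> borel_measurable M" "B \<in> sets M"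
  shows "emeasure (density M h) B = (\<integral>\<^sup>+z. h z * indicator B z \<partial>M)"
  by (simp add: emeasure_density)

lemma Pr_density:
  assumes a: "a > 0" and b: "b > 0" and r: "-1 < r" "r < 1"
  shows "Pr a b r = density (Ns a \<Otimes>\<^sub>M Ns b) (\<lambda>z. ennreal (exp (gg a b r z)))"
proof (rule measure_eqI)
  show "sets (Pr a b r) = sets (density (Ns a \<Otimes>\<^sub>M Ns b) (\<lambda>z. ennreal (exp (gg a b r z))))"
    by (simp add: Pr_def sets_Ns2)
  fix A assume "A \<in> sets (Pr a b r)"
  then have A[measurable]: "A \<in> sets (borel \<Otimes>\<^sub>M borel)" by (simp add: Pr_def)
  have "emeasure (Pr a b r) A = (\<integral>\<^sup>+z. indicator A (Tm a b r z) \<partial>(NN \<Otimes>\<^sub>M NN))"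
    unfolding Pr_def by (rule em_distr) (auto simp: measurable_cong_sets[OF sets_NN2 refl])
  also have "\<dots> = (\<integral>\<^sup>+z. ennreal (exp (gg a b r z)) * indicator A z \<partial>(Ns a \<Otimes>\<^sub>M Ns b))"
    by (rule core_int[OF a b r]) measurable
  also have "\<dots> = emeasure (density (Ns a \<Otimes>\<^sub>M Ns b) (\<lambda>z. ennreal (exp (gg a b r z)))) A"
    by (subst em_density) (auto simp: sets_Ns2)
  finally show "emeasure (Pr a b r) A = emeasure (density (Ns a \<Otimes>\<^sub>M Ns b) (\<lambda>z. ennreal (exp (gg a b r z)))) A" .
qed

lemma scale_NN:
  assumes a: "a > 0"
  shows "distr NN borel (\<lambda>u. a * u) = Ns a"
proof (rule measure_eqI)
  show "sets (distr NN borel (\<lambda>u. a * u)) = sets (Ns a)" by simp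
  fix A assume "A \<in> sets (distr NN borel (\<lambda>u. a * u))"
  then have A[measurable]: "A \<in> sets borel" by simp
  have "emeasure (distr NN borel (\<lambda>u. a * u)) A = (\<integral>\<^sup>+u. indicator A (a * u) \<partial>NN)"
    by (rule em_distr) (auto simp: measurable_cong_sets[OF sets_NN refl])
  also have "\<dots> = (\<integral>\<^sup>+u. ennreal (std_normal_density u) * indicator A (a * u) \<partial>lborel)"
    unfolding NN_def by (simp add: nn_integral_density)
  also have "\<dots> = (\<integral>\<^sup>+u. ennreal \<bar>a\<bar> * (ennreal (normal_density 0 a (0 + a * u)) * indicator A (0 + a * u)) \<partial>lborel)"
    using id1[OF a] a by (intro nn_integral_cong) (simp add: ennreal_mult[symmetric] mult.assoc[symmetric])
  also have "\<dots> = (\<integral>\<^sup>+x. ennreal (normal_density 0 a x) * indicator A x \<partial>lborel)"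
    by (rule aff_subst[symmetric]) (use a in auto)
  also have "\<dots> = emeasure (Ns a) A"
    unfolding Ns_def by (simp add: emeasure_density)
  finally show "emeasure (distr NN borel (\<lambda>u. a * u)) A = emeasure (Ns a) A" .
qed

lemma fst_marg:
  assumes a: "a > 0" and [measurable]: "T \<in> (borel \<Otimes>\<^sub>M borel) \<rightarrow>\<^sub>M (borel \<Otimes>\<^sub>M borel)" and Tf: "\<And>z. p (T z) = a * fst z"
    and [measurable]: "p \<in> borel_measurable (borel \<Otimes>\<^sub>M borel)"
  shows "distr (distr (NN \<Otimes>\<^sub>M NN) (borel \<Otimes>\<^sub>M borel) T) borel p = Ns a"
proof -
  interpret N: prob_space NN by (rule prob_NN)
  have mT: "T \<in> (NN \<Otimes>\<^sub>M NN) \<rightarrow>\<^sub>M (borel \<Otimes>\<^sub>M borel)" by (simp add: measurable_cong_sets[OF sets_NN2 refl])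
  have mp: "p \<in> borel_measurable (borel \<Otimes>\<^sub>M borel)" by measurable
  have "distr (distr (NN \<Otimes>\<^sub>M NN) (borel \<Otimes>\<^sub>M borel) T) borel p = distr (NN \<Otimes>\<^sub>M NN) borel (\<lambda>z. p (T z))"
    by (subst distr_distr) (auto simp: mT mp comp_def)
  also have "\<dots> = distr (NN \<Otimes>\<^sub>M NN) borel (\<lambda>z. a * fst z)" using Tf by simp
  also have "\<dots> = distr (distr (NN \<Otimes>\<^sub>M NN) NN fst) borel (\<lambda>u. a * u)"
    by (subst distr_distr) (auto simp: comp_def measurable_cong_sets[OF sets_NN refl])
  also have "\<dots> = Ns a" using N.distr_pair_fst[of NN] scale_NN[OF a] by (simp only:)
  finally show ?thesis .
qed

lemma gg_swap: "gg a b r (y, x) = gg b a r (x, y)"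
  by (simp add: gg_def algebra_simps)

lemma snd_marg:
  assumes a: "a > 0" and b: "b > 0" and r: "-1 < r" "r < 1"
  shows "distr (Pr a b r) borel snd = Ns b"
proof -
  interpret Na: prob_space "Ns a" using prob_Ns a .
  interpret Nb: prob_space "Ns b" using prob_Ns b .
  interpret P: pair_sigma_finite "Ns a" "Ns b" by unfold_locales
  have "distr (Pr a b r) borel snd = distr (Pr b a r) borel fst"
  proof (rule measure_eqI)
    show "sets (distr (Pr a b r) borel snd) = sets (distr (Pr b a r) borel fst)" by simp
    fix B assume "B \<in> sets (distr (Pr a b r) borel snd)"
    then have B[measurable]: "B \<in> sets borel" by simp
    have "emeasure (distr (Pr a b r) borel snd) B = (\<integral>\<^sup>+z. indicator B (snd z) \<partial>Pr a b r)"
      by (rule em_distr) (auto simp: Pr_def)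
    also have "\<dots> = (\<integral>\<^sup>+z. ennreal (exp (gg a b r z)) * indicator B (snd z) \<partial>(Ns a \<Otimes>\<^sub>M Ns b))"
      unfolding Pr_density[OF a b r] by (subst nn_integral_density) (auto simp: measurable_cong_sets[OF sets_Ns2 refl])
    also have "\<dots> = (\<integral>\<^sup>+z. ennreal (exp (gg a b r z)) * indicator B (snd z) \<partial>distr (Ns b \<Otimes>\<^sub>M Ns a) (Ns a \<Otimes>\<^sub>M Ns b) (\<lambda>(x, y). (y, x)))"
      by (simp only: P.distr_pair_swap[symmetric])
    also have "\<dots> = (\<integral>\<^sup>+z. ennreal (exp (gg a b r (case z of (x, y) \<Rightarrow> (y, x)))) * indicator B (snd (case z of (x, y) \<Rightarrow> (y, x))) \<partial>(Ns b \<Otimes>\<^sub>M Ns a))"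
      by (rule nn_integral_distr) (auto simp: measurable_cong_sets[OF sets_Ns2 refl])
    also have "\<dots> = (\<integral>\<^sup>+z. ennreal (exp (gg b a r z)) * indicator B (fst z) \<partial>(Ns b \<Otimes>\<^sub>M Ns a))"
      by (intro nn_integral_cong) (auto simp: gg_swap split: prod.splits)
    also have "\<dots> = (\<integral>\<^sup>+z. indicator B (fst z) \<partial>Pr b a r)"
      unfolding Pr_density[OF b a r] by (subst nn_integral_density) (auto simp: measurable_cong_sets[OF sets_Ns2 refl])
    also have "\<dots> = emeasure (distr (Pr b a r) borel fst) B"
      by (rule em_distr[symmetric]) (auto simp: Pr_def)
    finally show "emeasure (distr (Pr a b r) borel snd) B = emeasure (distr (Pr b a r) borel fst) B" .
  qed
  also have "\<dots> = Ns b" unfolding Pr_def by (rule fst_marg[OF b]) (auto simp: Tm_def split: prod.splits)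
  finally show ?thesis .
qed

lemma mom2:
  assumes a: "a > 0" and p[measurable]: "p \<in> borel_measurable M" and d: "distr M borel p = Ns a"
  shows "integrable M (\<lambda>z. (p z)\<^sup>2)" "(\<integral>z. (p z)\<^sup>2 \<partial>M) = a\<^sup>2"
proof -
  have i0: "integrable lborel (\<lambda>x. normal_density 0 a x * x\<^sup>2)"
    using integrable_normal_moment[of a 0 2] a by simp
  have "integrable (distr M borel p) (\<lambda>x. x\<^sup>2)"
    unfolding d Ns_def by (subst integrable_density) (use i0 in auto)
  then show "integrable M (\<lambda>z. (p z)\<^sup>2)"
    by (subst (asm) integrable_distr_eq) auto
  have "(\<integral>z. (p z)\<^sup>2 \<partial>M) = (\<integral>x. x\<^sup>2 \<partial>distr M borel p)"
    by (rule integral_distr[symmetric]) auto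
  also have "\<dots> = (\<integral>x. normal_density 0 a x * x\<^sup>2 \<partial>lborel)"
    unfolding d Ns_def by (subst integral_density) auto
  also have "\<dots> = a\<^sup>2"
    using integral_normal_moment_even[of a 0 1] a by (simp add: power2_eq_square)
  finally show "(\<integral>z. (p z)\<^sup>2 \<partial>M) = a\<^sup>2" .
qed

lemma gg_alt:
  assumes a: "a > 0" and b: "b > 0"
  shows "gg a b r z = - ln (sqrt (1 - r\<^sup>2)) - r / (2 * (1 - r\<^sup>2)) *
     (r / a\<^sup>2 * (fst z)\<^sup>2 + r / b\<^sup>2 * (snd z)\<^sup>2 - 1 / (a * b) * ((fst z)\<^sup>2 + (snd z)\<^sup>2 - (fst z - snd z)\<^sup>2))"
proof (cases z)
  case (Pair x y)
  have 1: "r * (r * (x/a)\<^sup>2 - 2 * (x/a) * (y/b) + r * (y/b)\<^sup>2) / (2 * (1 - r\<^sup>2))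
      = r / (2 * (1 - r\<^sup>2)) * (r * (x/a)\<^sup>2 - 2 * (x/a) * (y/b) + r * (y/b)\<^sup>2)" by simp
  have 2: "r * (x/a)\<^sup>2 - 2 * (x/a) * (y/b) + r * (y/b)\<^sup>2 = r / a\<^sup>2 * x\<^sup>2 + r / b\<^sup>2 * y\<^sup>2 - 1 / (a * b) * (x\<^sup>2 + y\<^sup>2 - (x - y)\<^sup>2)"
    using a b by (simp add: field_simps power2_eq_square)
  show ?thesis unfolding Pair gg_def using 1 2 by simp
qed

lemma gg_int:
  assumes a: "a > 0" and b: "b > 0" and r: "-1 < r" "r < 1" and pP: "prob_space P"
    and sP: "sets P = sets (borel \<Otimes>\<^sub>M borel)"
    and d1: "distr P borel fst = Ns a" and d2: "distr P borel snd = Ns b"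
    and ie: "integrable P (\<lambda>z. (fst z - snd z)\<^sup>2)"
  shows "integrable P (gg a b r)"
    "(\<integral>z. gg a b r z \<partial>P) = - ln (sqrt (1 - r\<^sup>2)) + r * ((a\<^sup>2 + b\<^sup>2 - (\<integral>z. (fst z - snd z)\<^sup>2 \<partial>P)) / (2 * a * b) - r) / (1 - r\<^sup>2)"
proof -
  have m1: "fst \<in> borel_measurable P" "snd \<in> borel_measurable P"
    by (simp_all add: measurable_cong_sets[OF sP refl])
  note i1 = mom2(1)[OF a m1(1) d1] and v1 = mom2(2)[OF a m1(1) d1]
  note i2 = mom2(1)[OF b m1(2) d2] and v2 = mom2(2)[OF b m1(2) d2]
  have eq: "gg a b r = (\<lambda>z. - ln (sqrt (1 - r\<^sup>2)) - r / (2 * (1 - r\<^sup>2)) *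
     (r / a\<^sup>2 * (fst z)\<^sup>2 + r / b\<^sup>2 * (snd z)\<^sup>2 - 1 / (a * b) * ((fst z)\<^sup>2 + (snd z)\<^sup>2 - (fst z - snd z)\<^sup>2)))"
    using gg_alt[OF a b] by auto
  interpret prob_space P by (rule pP)
  show "integrable P (gg a b r)" unfolding eq using i1 i2 ie by auto
  define E2 where "E2 = (\<integral>z. (fst z - snd z)\<^sup>2 \<partial>P)"
  have "(\<integral>z. gg a b r z \<partial>P) = - ln (sqrt (1 - r\<^sup>2)) - r / (2 * (1 - r\<^sup>2)) *
     (r / a\<^sup>2 * a\<^sup>2 + r / b\<^sup>2 * b\<^sup>2 - 1 / (a * b) * (a\<^sup>2 + b\<^sup>2 - E2))"
    unfolding eq E2_def using i1 i2 ie v1 v2 by (simp add: prob_space)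
  also have "\<dots> = - ln (sqrt (1 - r\<^sup>2)) + r * ((a\<^sup>2 + b\<^sup>2 - E2) / (2 * a * b) - r) / (1 - r\<^sup>2)"
  proof -
    have "1 - r\<^sup>2 \<noteq> 0" using r by (simp add: abs_square_less_1 less_imp_neq)
    then show ?thesis using a b by (simp add: field_simps)
  qed
  finally
  show "(\<integral>z. gg a b r z \<partial>P) = - ln (sqrt (1 - r\<^sup>2)) + r * ((a\<^sup>2 + b\<^sup>2 - (\<integral>z. (fst z - snd z)\<^sup>2 \<partial>P)) / (2 * a * b) - r) / (1 - r\<^sup>2)"
    unfolding E2_def .
qed

lemma NN_Ns1: "NN = Ns 1" by (simp add: NN_def Ns_def)

lemma NN_mean: "(\<integral>v. v \<partial>NN) = 0"
  unfolding NN_def using integral_std_normal_moment_odd[of 0] by (subst integral_density) auto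

lemma prodNN:
  shows "integrable (NN \<Otimes>\<^sub>M NN) (\<lambda>z. (fst z)\<^sup>2)" "(\<integral>z. (fst z)\<^sup>2 \<partial>(NN \<Otimes>\<^sub>M NN)) = 1"
    "integrable (NN \<Otimes>\<^sub>M NN) (\<lambda>z. (snd z)\<^sup>2)" "(\<integral>z. (snd z)\<^sup>2 \<partial>(NN \<Otimes>\<^sub>M NN)) = 1"
    "integrable (NN \<Otimes>\<^sub>M NN) (\<lambda>z. fst z * snd z)" "(\<integral>z. fst z * snd z \<partial>(NN \<Otimes>\<^sub>M NN)) = 0"
proof -
  interpret N: prob_space NN by (rule prob_NN)
  interpret P: pair_prob_space NN NN by unfold_locales
  have mf: "fst \<in> borel_measurable (NN \<Otimes>\<^sub>M NN)" "snd \<in> borel_measurable (NN \<Otimes>\<^sub>M NN)"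
    by (simp_all add: measurable_cong_sets[OF sets_NN2 refl])
  have d1: "distr (NN \<Otimes>\<^sub>M NN) borel fst = Ns 1"
    using N.distr_pair_fst[of NN] unfolding NN_Ns1[symmetric] by (metis distr_cong sets_NN)
  have "distr (NN \<Otimes>\<^sub>M NN) borel snd = distr (distr (NN \<Otimes>\<^sub>M NN) (NN \<Otimes>\<^sub>M NN) (\<lambda>(x, y). (y, x))) borel snd"
    using P.distr_pair_swap by simp
  also have "\<dots> = distr (NN \<Otimes>\<^sub>M NN) borel fst"
    by (subst distr_distr) (auto simp: comp_def mf intro!: distr_cong split: prod.splits)
  finally have d2: "distr (NN \<Otimes>\<^sub>M NN) borel snd = Ns 1" using d1 by simp
  show i1: "integrable (NN \<Otimes>\<^sub>M NN) (\<lambda>z. (fst z)\<^sup>2)" "(\<integral>z. (fst z)\<^sup>2 \<partial>(NN \<Otimes>\<^sub>M NN)) = 1"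
    using mom2[OF _ mf(1) d1] by simp_all
  show i2: "integrable (NN \<Otimes>\<^sub>M NN) (\<lambda>z. (snd z)\<^sup>2)" "(\<integral>z. (snd z)\<^sup>2 \<partial>(NN \<Otimes>\<^sub>M NN)) = 1"
    using mom2[OF _ mf(2) d2] by simp_all
  show i3: "integrable (NN \<Otimes>\<^sub>M NN) (\<lambda>z. fst z * snd z)"
  proof (rule Bochner_Integration.integrable_bound[where f="\<lambda>z. (fst z)\<^sup>2 + (snd z)\<^sup>2"])
    show "integrable (NN \<Otimes>\<^sub>M NN) (\<lambda>z. (fst z)\<^sup>2 + (snd z)\<^sup>2)" using i1 i2 by simp
    show "(\<lambda>z. fst z * snd z) \<in> borel_measurable (NN \<Otimes>\<^sub>M NN)" using mf by measurable
    show "AE x in NN \<Otimes>\<^sub>M NN. norm (fst x * snd x) \<le> norm ((fst x)\<^sup>2 + (snd x)\<^sup>2)"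
    proof (intro AE_I2)
      fix x :: "real \<times> real"
      have "\<bar>fst x * snd x\<bar> \<le> (fst x)\<^sup>2 + (snd x)\<^sup>2"
      proof -
        have "2 * \<bar>fst x\<bar> * \<bar>snd x\<bar> \<le> \<bar>fst x\<bar>\<^sup>2 + \<bar>snd x\<bar>\<^sup>2" by (rule sum_squares_bound)
        moreover have "0 \<le> \<bar>fst x\<bar> * \<bar>snd x\<bar>" by simp
        moreover have "\<bar>fst x * snd x\<bar> = \<bar>fst x\<bar> * \<bar>snd x\<bar>" by (rule abs_mult)
        moreover have "2 * \<bar>fst x\<bar> * \<bar>snd x\<bar> = 2 * (\<bar>fst x\<bar> * \<bar>snd x\<bar>)" by simp
        moreover have "\<bar>fst x\<bar>\<^sup>2 + \<bar>snd x\<bar>\<^sup>2 = (fst x)\<^sup>2 + (snd x)\<^sup>2" by simp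
        ultimately show ?thesis by linarith
      qed
      then show "norm (fst x * snd x) \<le> norm ((fst x)\<^sup>2 + (snd x)\<^sup>2)" by simp
    qed
  qed
  have "(\<integral>z. fst z * snd z \<partial>(NN \<Otimes>\<^sub>M NN)) = (\<integral>u. \<integral>v. u * v \<partial>NN \<partial>NN)"
    using P.integral_fst[of "\<lambda>u v. u * v"] i3 by (simp add: case_prod_beta')
  also have "\<dots> = 0" by (simp add: NN_mean)
  finally show "(\<integral>z. fst z * snd z \<partial>(NN \<Otimes>\<^sub>M NN)) = 0" .
qed

lemma Pr_props:
  assumes a: "a > 0" and b: "b > 0" and r: "0 \<le> r" "r \<le> 1"
  shows "prob_space (Pr a b r)" "sets (Pr a b r) = sets (borel \<Otimes>\<^sub>M borel)"
    "distr (Pr a b r) borel fst = Ns a" "distr (Pr a b r) borel snd = Ns b"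
    "integrable (Pr a b r) (\<lambda>z. (fst z - snd z)\<^sup>2)"
    "(\<integral>z. (fst z - snd z)\<^sup>2 \<partial>Pr a b r) = a\<^sup>2 + b\<^sup>2 - 2 * r * a * b"
    "jointly_gaussian (Pr a b r)"
proof -
  interpret N: prob_space NN by (rule prob_NN)
  interpret P: pair_prob_space NN NN by unfold_locales
  have mT: "Tm a b r \<in> (NN \<Otimes>\<^sub>M NN) \<rightarrow>\<^sub>M (borel \<Otimes>\<^sub>M borel)" by (simp add: measurable_cong_sets[OF sets_NN2 refl])
  show "prob_space (Pr a b r)" unfolding Pr_def by (rule P.prob_space_distr[OF mT])
  show "sets (Pr a b r) = sets (borel \<Otimes>\<^sub>M borel)" by (simp add: Pr_def)
  show "distr (Pr a b r) borel fst = Ns a" unfolding Pr_def by (rule fst_marg[OF a]) (auto simp: Tm_def split: prod.splits)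
  show "distr (Pr a b r) borel snd = Ns b"
  proof (cases "r = 1")
    case True
    show ?thesis unfolding Pr_def by (rule fst_marg[OF b]) (auto simp: Tm_def True split: prod.splits)
  next
    case False
    then show ?thesis using snd_marg[OF a b] r by simp
  qed
  define s where "s = sqrt (1 - r\<^sup>2)"
  have s2: "s\<^sup>2 = 1 - r\<^sup>2" unfolding s_def using r by (simp add: power_le_one)
  have eq: "(\<lambda>z. (fst (Tm a b r z) - snd (Tm a b r z))\<^sup>2) = (\<lambda>z. (a - b * r)\<^sup>2 * (fst z)\<^sup>2 - 2 * (a - b * r) * (b * s) * (fst z * snd z) + (b * s)\<^sup>2 * (snd z)\<^sup>2)"
    by (rule ext) (auto simp: Tm_def s_def power2_eq_square algebra_simps split: prod.splits)
  have iT: "integrable (NN \<Otimes>\<^sub>M NN) (\<lambda>z. (fst (Tm a b r z) - snd (Tm a b r z))\<^sup>2)"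
    unfolding eq using prodNN by auto
  show "integrable (Pr a b r) (\<lambda>z. (fst z - snd z)\<^sup>2)"
    unfolding Pr_def by (subst integrable_distr_eq[OF mT]) (use iT in auto)
  have "(\<integral>z. (fst z - snd z)\<^sup>2 \<partial>Pr a b r) = (\<integral>z. (fst (Tm a b r z) - snd (Tm a b r z))\<^sup>2 \<partial>(NN \<Otimes>\<^sub>M NN))"
    unfolding Pr_def by (rule integral_distr[OF mT]) auto
  also have "\<dots> = (a - b * r)\<^sup>2 + (b * s)\<^sup>2" unfolding eq using prodNN by simp
  also have "\<dots> = a\<^sup>2 + b\<^sup>2 - 2 * r * a * b"
  proof -
    have "(b * s)\<^sup>2 = b\<^sup>2 * (1 - r\<^sup>2)" using s2 by (simp add: power_mult_distrib)
    then show ?thesis by (simp add: power2_eq_square algebra_simps)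
  qed
  finally show "(\<integral>z. (fst z - snd z)\<^sup>2 \<partial>Pr a b r) = a\<^sup>2 + b\<^sup>2 - 2 * r * a * b" .
  show "jointly_gaussian (Pr a b r)"
    unfolding jointly_gaussian_def
  proof (intro exI)
    show "Pr a b r = distr (density lborel std_normal_density \<Otimes>\<^sub>M density lborel std_normal_density) (borel \<Otimes>\<^sub>M borel)
      (\<lambda>(u, v). (a * u + 0 * v + 0, (b * r) * u + (b * s) * v + 0))"
      unfolding Pr_def NN_def[symmetric] by (intro distr_cong) (auto simp: Tm_def s_def algebra_simps)
  qed
qed

lemma log_e: "log (exp 1) x = ln x" by (simp add: log_def)

lemma MI_Pr:
  assumes a: "a > 0" and b: "b > 0" and r: "0 \<le> r" "r < 1"
  shows "mutual_info (Pr a b r) = ereal (- ln (sqrt (1 - r\<^sup>2)))"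
proof -
  note props = Pr_props[OF a b r(1) less_imp_le[OF r(2)]]
  define P where "P = Pr a b r"
  define Q where "Q = Ns a \<Otimes>\<^sub>M Ns b"
  interpret Q: prob_space Q unfolding Q_def by (intro prob_space_pair prob_Ns a b)
  have r': "-1 < r" "r < 1" using r by auto
  have PQ: "P = density Q (\<lambda>z. ennreal (exp (gg a b r z)))" unfolding P_def Q_def by (rule Pr_density[OF a b r'])
  have mg: "(\<lambda>z. ennreal (exp (gg a b r z))) \<in> borel_measurable Q"
    unfolding Q_def by (simp add: measurable_cong_sets[OF sets_Ns2 refl])
  have ac: "absolutely_continuous Q P" unfolding PQ by (rule absolutely_continuousI_density[OF mg])
  have "AE z in Q. ennreal (exp (gg a b r z)) = RN_deriv Q P z"
    by (rule Q.RN_deriv_unique[OF mg PQ[symmetric]])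
  then have "AE z in P. ennreal (exp (gg a b r z)) = RN_deriv Q P z"
    unfolding PQ by (subst AE_density[OF mg]) (auto elim: AE_mp)
  then have ae: "AE z in P. entropy_density (exp 1) Q P z = gg a b r z"
  proof (rule AE_mp, intro AE_I2 impI)
    fix z assume h: "ennreal (exp (gg a b r z)) = RN_deriv Q P z"
    show "entropy_density (exp 1) Q P z = gg a b r z"
      unfolding entropy_density_def comp_def h[symmetric] by (simp add: log_e)
  qed
  have ig: "integrable P (gg a b r)" and vg: "(\<integral>z. gg a b r z \<partial>P) = - ln (sqrt (1 - r\<^sup>2)) + r * ((a\<^sup>2 + b\<^sup>2 - (\<integral>z. (fst z - snd z)\<^sup>2 \<partial>P)) / (2 * a * b) - r) / (1 - r\<^sup>2)"
    using gg_int[OF a b r' props(1,2,3,4,5)] unfolding P_def by auto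
  have sPQ: "sets P = sets Q" unfolding PQ by simp
  have me: "entropy_density (exp 1) Q P \<in> borel_measurable P"
    using measurable_entropy_density[of "exp 1" Q P] by (simp add: measurable_cong_sets[OF sPQ refl])
  have ie: "integrable P (entropy_density (exp 1) Q P)"
    using ig by (rule integrable_cong_AE_imp) (use ae me in \<open>auto elim: AE_mp\<close>)
  have "KL_divergence (exp 1) Q P = (\<integral>z. gg a b r z \<partial>P)"
    unfolding KL_divergence_def by (rule integral_cong_AE) (use ae in \<open>auto simp: P_def props(2) measurable_cong_sets[OF props(2) refl] measurable_cong_sets[OF sets_Ns2 refl] Q_def\<close>)
  also have "\<dots> = - ln (sqrt (1 - r\<^sup>2))"
    unfolding vg using a b props(6) unfolding P_def by (simp add: field_simps)
  finally have KL: "KL_divergence (exp 1) Q P = - ln (sqrt (1 - r\<^sup>2))" .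
  have QQ: "distr P borel fst \<Otimes>\<^sub>M distr P borel snd = Q" unfolding P_def Q_def using props by simp
  show ?thesis unfolding mutual_info_def Let_def QQ P_def[symmetric] using ac ie KL by simp
qed

lemma MI_lower:
  assumes a: "a > 0" and b: "b > 0" and r: "0 \<le> r" "r < 1" and pP: "prob_space P"
    and sP: "sets P = sets (borel \<Otimes>\<^sub>M borel)"
    and d1: "distr P borel fst = Ns a" and d2: "distr P borel snd = Ns b"
    and ie: "integrable P (\<lambda>z. (fst z - snd z)\<^sup>2)"
    and c: "0 \<le> r * ((a\<^sup>2 + b\<^sup>2 - (\<integral>z. (fst z - snd z)\<^sup>2 \<partial>P)) / (2 * a * b) - r)"
  shows "ereal (- ln (sqrt (1 - r\<^sup>2))) \<le> mutual_info P"
proof -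
  interpret P: prob_space P by (rule pP)
  define Q where "Q = Ns a \<Otimes>\<^sub>M Ns b"
  interpret Q: prob_space Q unfolding Q_def by (intro prob_space_pair prob_Ns a b)
  have r': "-1 < r" "r < 1" using r by auto
  have QQ: "distr P borel fst \<Otimes>\<^sub>M distr P borel snd = Q" unfolding Q_def using d1 d2 by simp
  have sPQ: "sets P = sets Q" unfolding Q_def sP by (simp add: sets_Ns2)
  show ?thesis
  proof (cases "absolutely_continuous Q P \<and> integrable P (entropy_density (exp 1) Q P)")
    case False
    then show ?thesis unfolding mutual_info_def Let_def QQ by auto
  next
    case True
    then have ac: "absolutely_continuous Q P" and ient: "integrable P (entropy_density (exp 1) Q P)" by auto
    define R where "R = RN_deriv Q P"
    have mR: "R \<in> borel_measurable Q" unfolding R_def by simp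
    have PR: "density Q R = P" unfolding R_def by (rule Q.density_RN_deriv[OF ac sPQ])
    have fin: "AE z in Q. R z \<noteq> \<infinity>" unfolding R_def
      by (rule Q.RN_deriv_finite[OF _ ac sPQ]) unfold_locales
    define f where "f z = enn2real (R z)" for z
    have posP: "AE z in P. 0 < f z"
      unfolding PR[symmetric] using fin
      by (subst AE_density[OF mR]) (auto elim!: AE_mp simp: f_def enn2real_positive_iff top.not_eq_extremum)
    have mQP: "\<And>h. h \<in> borel_measurable Q \<Longrightarrow> h \<in> borel_measurable P"
      by (simp add: measurable_cong_sets[OF sPQ refl])
    have mf: "f \<in> borel_measurable Q" unfolding f_def using mR by measurable
    have mg: "gg a b r \<in> borel_measurable Q" unfolding Q_def by (simp add: measurable_cong_sets[OF sets_Ns2 refl])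
    define h where "h z = exp (gg a b r z) / f z" for z
    have mh: "h \<in> borel_measurable Q" unfolding h_def using mf mg by measurable
    have "(\<integral>\<^sup>+z. ennreal (h z) \<partial>P) = (\<integral>\<^sup>+z. R z * ennreal (h z) \<partial>Q)"
      unfolding PR[symmetric] by (rule nn_integral_density[OF mR]) (use mh in simp)
    also have "\<dots> \<le> (\<integral>\<^sup>+z. ennreal (exp (gg a b r z)) \<partial>Q)"
    proof (rule nn_integral_mono)
      fix z
      show "R z * ennreal (h z) \<le> ennreal (exp (gg a b r z))"
      proof (cases "R z = \<infinity>")
        case True then show ?thesis by (simp add: h_def f_def)
      next
        case False
        then have Rz: "R z = ennreal (f z)" "0 \<le> f z" unfolding f_def by (auto simp: less_top)
        show ?thesis
        proof (cases "f z = 0")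
          case True then show ?thesis using Rz by simp
        next
          case False
          then have "f z * h z = exp (gg a b r z)" unfolding h_def by simp
          then show ?thesis using Rz unfolding Rz(1) by (simp add: ennreal_mult'[symmetric] h_def)
        qed
      qed
    qed
    also have "\<dots> = emeasure (density Q (\<lambda>z. ennreal (exp (gg a b r z)))) (space Q)"
      using mg by (subst emeasure_density) (auto intro!: nn_integral_cong)
    also have "\<dots> = 1"
      using Pr_density[OF a b r'] Pr_props(1)[OF a b r(1) less_imp_le[OF r(2)]] unfolding Q_def
      by (metis prob_space.emeasure_space_1 space_density)
    finally have hle: "(\<integral>\<^sup>+z. ennreal (h z) \<partial>P) \<le> 1" .
    have hnn: "\<And>z. 0 \<le> h z" unfolding h_def f_def by simp
    have ih: "integrable P h"
      by (rule integrableI_nonneg) (use mh mQP hnn hle in \<open>auto simp: top.not_eq_extremum intro: le_less_trans\<close>)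
    have "(\<integral>z. h z \<partial>P) = enn2real (\<integral>\<^sup>+z. ennreal (h z) \<partial>P)"
      by (rule integral_eq_nn_integral) (use mh mQP hnn in auto)
    also have "\<dots> \<le> 1" using hle by (simp add: enn2real_leI)
    finally have hi: "(\<integral>z. h z \<partial>P) \<le> 1" .
    have ig: "integrable P (gg a b r)" and vg: "(\<integral>z. gg a b r z \<partial>P) = - ln (sqrt (1 - r\<^sup>2)) + r * ((a\<^sup>2 + b\<^sup>2 - (\<integral>z. (fst z - snd z)\<^sup>2 \<partial>P)) / (2 * a * b) - r) / (1 - r\<^sup>2)"
      using gg_int[OF a b r' pP sP d1 d2 ie] by auto
    have ent: "entropy_density (exp 1) Q P = (\<lambda>z. ln (f z))"
      by (auto simp: entropy_density_def f_def R_def log_e)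
    have "(\<integral>z. 1 - h z \<partial>P) \<le> (\<integral>z. ln (f z) - gg a b r z \<partial>P)"
    proof (rule integral_mono_AE)
      show "integrable P (\<lambda>z. 1 - h z)" using ih by simp
      show "integrable P (\<lambda>z. ln (f z) - gg a b r z)" using ient ig unfolding ent by simp
      show "AE z in P. 1 - h z \<le> ln (f z) - gg a b r z"
        using posP
      proof (rule AE_mp, intro AE_I2 impI)
        fix z assume fz: "0 < f z"
        have hz: "0 < h z" using fz unfolding h_def by simp
        have "ln (h z) = gg a b r z - ln (f z)" using fz unfolding h_def by (simp add: ln_div)
        with ln_le_minus_one[OF hz] show "1 - h z \<le> ln (f z) - gg a b r z" by simp
      qed
    qed
    then have "1 - (\<integral>z. h z \<partial>P) \<le> (\<integral>z. ln (f z) \<partial>P) - (\<integral>z. gg a b r z \<partial>P)"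
      using ih ient ig unfolding ent by (simp add: P.prob_space)
    with hi have KLge: "(\<integral>z. gg a b r z \<partial>P) \<le> KL_divergence (exp 1) Q P"
      unfolding KL_divergence_def ent by simp
    have "- ln (sqrt (1 - r\<^sup>2)) \<le> (\<integral>z. gg a b r z \<partial>P)"
    proof -
      have "0 < 1 - r\<^sup>2" using r' by (simp add: abs_square_less_1)
      then have "0 \<le> r * ((a\<^sup>2 + b\<^sup>2 - (\<integral>z. (fst z - snd z)\<^sup>2 \<partial>P)) / (2 * a * b) - r) / (1 - r\<^sup>2)"
        using c by simp
      then show ?thesis unfolding vg by simp
    qed
    then show ?thesis unfolding mutual_info_def Let_def QQ using True KLge by simp
  qed
qed

lemma feas:
  assumes a: "a > 0" and b: "b > 0" and r: "0 \<le> r" "r \<le> 1" and D: "a\<^sup>2 + b\<^sup>2 - 2 * r * a * b \<le> D"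
  shows "gauss_coupling a b D (Pr a b r)"
  using Pr_props[OF a b r] D unfolding gauss_coupling_def Ns_def by auto

lemma lowerD:
  assumes a: "a > 0" and b: "b > 0" and r: "0 \<le> r" "r < 1" and G: "gauss_coupling a b D P"
    and c: "0 \<le> r * ((a\<^sup>2 + b\<^sup>2 - D) / (2 * a * b) - r)"
  shows "ereal (- ln (sqrt (1 - r\<^sup>2))) \<le> mutual_info P"
proof -
  have G': "sets P = sets (borel \<Otimes>\<^sub>M borel)" "prob_space P" "distr P borel fst = Ns a" "distr P borel snd = Ns b"
    "integrable P (\<lambda>z. (fst z - snd z)\<^sup>2)" "(\<integral>z. (fst z - snd z)\<^sup>2 \<partial>P) \<le> D"
    using G unfolding gauss_coupling_def Ns_def by auto
  have "(a\<^sup>2 + b\<^sup>2 - D) / (2 * a * b) \<le> (a\<^sup>2 + b\<^sup>2 - (\<integral>z. (fst z - snd z)\<^sup>2 \<partial>P)) / (2 * a * b)"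
    using G'(6) a b by (intro divide_right_mono) auto
  then have "r * ((a\<^sup>2 + b\<^sup>2 - D) / (2 * a * b) - r) \<le> r * ((a\<^sup>2 + b\<^sup>2 - (\<integral>z. (fst z - snd z)\<^sup>2 \<partial>P)) / (2 * a * b) - r)"
    using r by (intro mult_left_mono) auto
  with c have "0 \<le> r * ((a\<^sup>2 + b\<^sup>2 - (\<integral>z. (fst z - snd z)\<^sup>2 \<partial>P)) / (2 * a * b) - r)" by linarith
  then show ?thesis using MI_lower[OF a b r G'(2,1,3,4,5)] by simp
qed

lemma infty:
  assumes a: "a > 0" and b: "b > 0" and G: "gauss_coupling a b D P" and rD: "1 \<le> (a\<^sup>2 + b\<^sup>2 - D) / (2 * a * b)"
  shows "mutual_info P = \<infinity>"
proof -
  have lb: "ereal (- ln (sqrt (1 - r\<^sup>2))) \<le> mutual_info P" if "0 \<le> r" "r < 1" for r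
    by (rule lowerD[OF a b that G]) (use that rD in \<open>auto intro!: mult_nonneg_nonneg\<close>)
  have z: "0 \<le> mutual_info P" using lb[of 0] by (simp add: zero_ereal_def)
  show ?thesis
  proof (rule ccontr)
    assume ne: "mutual_info P \<noteq> \<infinity>"
    then obtain m where m: "mutual_info P = ereal m" using z by (cases "mutual_info P") auto
    define r where "r = sqrt (1 - exp (- 2 * (\<bar>m\<bar> + 1)))"
    have e1: "exp (- 2 * (\<bar>m\<bar> + 1)) < 1" by simp
    have e0: "0 < exp (- 2 * (\<bar>m\<bar> + 1))" by simp
    have r0: "0 \<le> r" "r < 1" unfolding r_def using e0 e1 by auto
    have "r\<^sup>2 = 1 - exp (- 2 * (\<bar>m\<bar> + 1))" unfolding r_def using e1 by simp
    then have "1 - r\<^sup>2 = exp (- 2 * (\<bar>m\<bar> + 1))" by simp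
    then have "- ln (sqrt (1 - r\<^sup>2)) = - (ln (exp (- 2 * (\<bar>m\<bar> + 1))) / 2)" by (simp add: ln_sqrt)
    also have "\<dots> = \<bar>m\<bar> + 1" by (simp add: field_simps)
    finally have "- ln (sqrt (1 - r\<^sup>2)) = \<bar>m\<bar> + 1" .
    with lb[OF r0] m show False by simp
  qed
qed

lemma INF_infty:
  assumes a: "a > 0" and b: "b > 0" and rD: "1 \<le> (a\<^sup>2 + b\<^sup>2 - D) / (2 * a * b)"
  shows "I_out a b D = \<infinity>"
proof -
  have "I_out a b D = (INF P \<in> {P. gauss_coupling a b D P}. (\<infinity>::ereal))"
    unfolding I_out_def using infty[OF a b _ rD] by (intro INF_cong) auto
  also have "\<dots> = \<infinity>" by (simp add: top_ereal_def[symmetric])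
  finally show ?thesis .
qed

lemma upper_r0:
  assumes a: "a > 0" and b: "b > 0" and rD: "(a\<^sup>2 + b\<^sup>2 - D) / (2 * a * b) < 1"
  defines "r0 \<equiv> max 0 ((a\<^sup>2 + b\<^sup>2 - D) / (2 * a * b))"
  shows "gauss_coupling a b D (Pr a b r0)" "jointly_gaussian (Pr a b r0)"
    "mutual_info (Pr a b r0) = ereal (- ln (sqrt (1 - r0\<^sup>2)))"
    "\<And>P. gauss_coupling a b D P \<Longrightarrow> mutual_info (Pr a b r0) \<le> mutual_info P"
proof -
  have r: "0 \<le> r0" "r0 < 1" using rD unfolding r0_def by auto
  have ab: "0 < 2 * a * b" using a b by simp
  have "a\<^sup>2 + b\<^sup>2 - D \<le> r0 * (2 * a * b)"
  proof (cases "0 \<le> (a\<^sup>2 + b\<^sup>2 - D) / (2 * a * b)")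
    case True
    then show ?thesis unfolding r0_def using ab a b by (simp add: max_def)
  next
    case False
    then have "a\<^sup>2 + b\<^sup>2 - D < 0" using ab by (simp add: zero_le_divide_iff)
    then show ?thesis unfolding r0_def using False by simp
  qed
  then have Dle: "a\<^sup>2 + b\<^sup>2 - 2 * r0 * a * b \<le> D" by (simp add: algebra_simps)
  show "gauss_coupling a b D (Pr a b r0)" by (rule feas[OF a b r(1) less_imp_le[OF r(2)] Dle])
  show "jointly_gaussian (Pr a b r0)" using Pr_props[OF a b r(1) less_imp_le[OF r(2)]] by simp
  show MI: "mutual_info (Pr a b r0) = ereal (- ln (sqrt (1 - r0\<^sup>2)))" by (rule MI_Pr[OF a b r])
  fix P assume G: "gauss_coupling a b D P"
  have "0 \<le> r0 * ((a\<^sup>2 + b\<^sup>2 - D) / (2 * a * b) - r0)"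
    unfolding r0_def by (auto simp: max_def)
  from lowerD[OF a b r G this] show "mutual_info (Pr a b r0) \<le> mutual_info P" unfolding MI .
qed

theorem mainTheorem9:
  fixes sx sy :: real
  assumes "sx > 0" and "sy > 0"
  shows "(\<forall>D. I_out sx sy D =
            (INF P \<in> {P. gauss_coupling sx sy D P \<and> jointly_gaussian P}. mutual_info P)) \<and>
         (\<forall>D. (sx - sy)\<^sup>2 \<le> D \<and> D \<le> sx\<^sup>2 + sy\<^sup>2 \<longrightarrow>
            (let r = (sx\<^sup>2 + sy\<^sup>2 - D) / (2 * sx * sy) in
              (\<exists>P. gauss_coupling sx sy D P \<and> jointly_gaussian P \<and> mutual_info P = I_out sx sy D) \<and>
              I_out sx sy D = (if r\<^sup>2 = 1 then \<infinity> else ereal (1/2 * ln (1 / (1 - r\<^sup>2))))))"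
proof (intro conjI allI impI)
  note a = assms(1) and b = assms(2)
  fix D
  have le1: "I_out sx sy D \<le> (INF P \<in> {P. gauss_coupling sx sy D P \<and> jointly_gaussian P}. mutual_info P)"
    unfolding I_out_def by (rule INF_superset_mono) auto
  show "I_out sx sy D = (INF P \<in> {P. gauss_coupling sx sy D P \<and> jointly_gaussian P}. mutual_info P)"
  proof (cases "1 \<le> (sx\<^sup>2 + sy\<^sup>2 - D) / (2 * sx * sy)")
    case True
    then have "I_out sx sy D = \<infinity>" by (rule INF_infty[OF a b])
    with le1 show ?thesis by simp
  next
    case False
    then have rD: "(sx\<^sup>2 + sy\<^sup>2 - D) / (2 * sx * sy) < 1" by simp
    note U = upper_r0[OF a b rD]
    define P0 where "P0 = Pr sx sy (max 0 ((sx\<^sup>2 + sy\<^sup>2 - D) / (2 * sx * sy)))"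
    have "(INF P \<in> {P. gauss_coupling sx sy D P \<and> jointly_gaussian P}. mutual_info P) \<le> mutual_info P0"
      by (rule INF_lower) (use U in \<open>auto simp: P0_def\<close>)
    also have "\<dots> \<le> I_out sx sy D"
      unfolding I_out_def by (rule INF_greatest) (use U in \<open>auto simp: P0_def\<close>)
    finally show ?thesis using le1 by simp
  qed
next
  note a = assms(1) and b = assms(2)
  fix D assume D: "(sx - sy)\<^sup>2 \<le> D \<and> D \<le> sx\<^sup>2 + sy\<^sup>2"
  define r where "r = (sx\<^sup>2 + sy\<^sup>2 - D) / (2 * sx * sy)"
  have ab: "0 < 2 * sx * sy" using a b by simp
  have r0: "0 \<le> r" unfolding r_def using D ab by simp
  have r1: "r \<le> 1" unfolding r_def using D ab by (simp add: divide_le_eq power2_eq_square algebra_simps)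
  show "let r = (sx\<^sup>2 + sy\<^sup>2 - D) / (2 * sx * sy) in
              (\<exists>P. gauss_coupling sx sy D P \<and> jointly_gaussian P \<and> mutual_info P = I_out sx sy D) \<and>
              I_out sx sy D = (if r\<^sup>2 = 1 then \<infinity> else ereal (1/2 * ln (1 / (1 - r\<^sup>2))))"
    unfolding Let_def r_def[symmetric]
  proof (cases "r = 1")
    case True
    have I: "I_out sx sy D = \<infinity>" using INF_infty[OF a b, of D] True unfolding r_def by simp
    have Dle: "sx\<^sup>2 + sy\<^sup>2 - 2 * 1 * sx * sy \<le> D" using D by (simp add: power2_eq_square algebra_simps)
    have G: "gauss_coupling sx sy D (Pr sx sy 1)" by (rule feas[OF a b _ _ Dle]) auto
    have J: "jointly_gaussian (Pr sx sy 1)" using Pr_props[OF a b, of 1] by simp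
    have M: "mutual_info (Pr sx sy 1) = \<infinity>" by (rule infty[OF a b G]) (metis True r_def order_refl)
    show "(\<exists>P. gauss_coupling sx sy D P \<and> jointly_gaussian P \<and> mutual_info P = I_out sx sy D) \<and>
      I_out sx sy D = (if r\<^sup>2 = 1 then \<infinity> else ereal (1 / 2 * ln (1 / (1 - r\<^sup>2))))"
      using G J M I True by auto
  next
    case False
    then have rl: "r < 1" using r1 by simp
    then have rD: "(sx\<^sup>2 + sy\<^sup>2 - D) / (2 * sx * sy) < 1" unfolding r_def .
    have rm: "max 0 ((sx\<^sup>2 + sy\<^sup>2 - D) / (2 * sx * sy)) = r" using r0 unfolding r_def by simp
    note U = upper_r0[OF a b rD, unfolded rm]
    have I: "I_out sx sy D = mutual_info (Pr sx sy r)"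
    proof (rule antisym)
      show "I_out sx sy D \<le> mutual_info (Pr sx sy r)" unfolding I_out_def by (rule INF_lower) (use U in auto)
      show "mutual_info (Pr sx sy r) \<le> I_out sx sy D" unfolding I_out_def by (rule INF_greatest) (use U in auto)
    qed
    have r2': "r\<^sup>2 < 1" using r0 rl by (simp add: abs_square_less_1)
    then have r2: "r\<^sup>2 \<noteq> 1" by simp
    have pos: "0 < 1 - r\<^sup>2" using r0 rl by (simp add: abs_square_less_1)
    have "- ln (sqrt (1 - r\<^sup>2)) = 1 / 2 * ln (1 / (1 - r\<^sup>2))" using pos by (simp add: ln_sqrt ln_div)
    then show "(\<exists>P. gauss_coupling sx sy D P \<and> jointly_gaussian P \<and> mutual_info P = I_out sx sy D) \<and>
      I_out sx sy D = (if r\<^sup>2 = 1 then \<infinity> else ereal (1 / 2 * ln (1 / (1 - r\<^sup>2))))"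
      using U I r2 by auto
  qed
qed

end
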